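(* Let $\alpha\in(0,1)$, $\theta_1,\ldots,\theta_{M_1}\in\Theta_1$, and let $\Phi^\ast$ and $\Delta^\ast_{M_1}$ be as defined below. Suppose that for every $\bar\Omega^\ast=(\omega_1^\ast,\ldots,\omega^\ast_{M_1})\in\Delta_{M_1}^\ast$ a least favorable distribution $\Lambda_{\bar\Omega^\ast}$ over $\Theta_0$ (for the alternative density $g_{\bar\Omega^\ast}=\sum_j\omega_j^\ast f_{\theta_j}$) exists and that the set \[ \Big\{y\in\mathcal Y:\ \sum_{j=1}^{M_1}\omega_j^\ast f_{\theta_j}(y)=\mathrm{cv}_{\bar\Omega^\ast}\int f_\theta(y)\,d\Lambda_{\bar\Omega^\ast}(\theta)\Big\} \] has $\nu$-measure zero. Then for every $\bar\Omega^\ast\in\Delta^\ast_{M_1}$, the Neyman–Pearson test $\varphi_{\Lambda_{\bar\Omega^\ast},\bar\Omega^\ast}$ is the $\nu$-a.e. unique maximizer over $\varphi\in\Phi_\alpha$ of $\sum_{j=1}^{M_1}\omega_j^\ast\int(\varphi-\varphi_{ah})f_{\theta_j}\,d\nu$. Furthermore, for any $\varphi_1^\ast,\varphi_2^\ast\in\Phi^\ast$ and any $\bar\Omega_1^\ast,\bar\Omega_2^\ast\in\Delta^\ast_{M_1}$, \[ \varphi_1^\ast=\varphi_2^\ast=\varphi_{\Lambda_{\bar\Omega_1^\ast},\bar\Omega_1^\ast}=\varphi_{\Lambda_{\bar\Omega_2^\ast},\bar\Omega_2^\ast}\quad\nu\text{-a.e.} \]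
   Context: A random element $Y$ takes values in a metric space $\mathcal Y$ (with its Borel $\sigma$-algebra) and has density $f_\theta$ with respect to a $\sigma$-finite measure $\nu$, where $\theta\in\Theta\subset\mathbb R^k$; $(\theta,y)\mapsto f_\theta(y)$ is assumed jointly measurable. $\Theta_0,\Theta_1\subset\Theta$ are disjoint Borel sets. A test is a measurable $\varphi:\mathcal Y\to[0,1]$; $\Phi$ is the set of all tests and $\Phi_\alpha=\{\varphi\in\Phi:\sup_{\theta\in\Theta_0}\int\varphi f_\theta\,d\nu\le\alpha\}$. $\varphi_{ah}\in\Phi_\alpha$ is a fixed given test. $\Delta_{M_1}$ is the unit simplex in $\mathbb R^{M_1}$. Define $\Phi^\ast=\arg\max_{\varphi\in\Phi_\alpha}\min_{j=1,\ldots,M_1}\int(\varphi-\varphi_{ah})f_{\theta_j}\,d\nu$ and $\Delta^\ast_{M_1}=\arg\min_{\bar\Omega\in\Delta_{M_1}}\sup_{\varphi\in\Phi_\alpha}\sum_{j}\omega_j\int(\varphi-\varphi_{ah})f_{\theta_j}\,d\nu$. For an alternative density $g$ and a probability distribution $\Lambda$ on $\Theta_0$, write $h_\Lambda=\int f_\theta\,d\Lambda(\theta)$ and let $\beta_\Lambda=\sup\{\int\varphi g\,d\nu:\varphi\in\Phi,\ \int\varphi h_\Lambda\,d\nu\le\alpha\}$. $\Lambda$ is a least favorable distribution (for $g$) if $\beta_\Lambda\le\beta_{\Lambda'}$ for every probability distribution $\Lambda'$ on $\Theta_0$. For $g=g_{\bar\Omega}=\sum_j\omega_jf_{\theta_j}$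 and such $\Lambda$, the Neyman–Pearson test $\varphi_{\Lambda,\bar\Omega}$ equals $1$ where $g>\mathrm{cv}_{\bar\Omega}h_\Lambda$, equals $\varkappa_{\bar\Omega}$ where $g=\mathrm{cv}_{\bar\Omega}h_\Lambda$, and $0$ where $g<\mathrm{cv}_{\bar\Omega}h_\Lambda$, with constants $\mathrm{cv}_{\bar\Omega}\ge0$, $\varkappa_{\bar\Omega}\in[0,1]$ chosen so that $\int\varphi_{\Lambda,\bar\Omega}h_\Lambda\,d\nu=\alpha$. *)

theory Defs
  imports "HOL-Probability.Probability"
begin

definition is_test :: "'y measure \<Rightarrow> ('y \<Rightarrow> real) \<Rightarrow> bool" where
  "is_test \<nu> \<phi> \<longleftrightarrow> \<phi> \<in> borel_measurable \<nu> \<and> (\<forall>y. 0 \<le> \<phi> y \<and> \<phi> y \<le> 1)"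

definition rej_prob :: "'y measure \<Rightarrow> ('y \<Rightarrow> real) \<Rightarrow> ('y \<Rightarrow> real) \<Rightarrow> real" where
  "rej_prob \<nu> \<phi> d = (LINT y|\<nu>. \<phi> y * d y)"

definition level_tests :: "'y measure \<Rightarrow> ('p \<Rightarrow> 'y \<Rightarrow> real) \<Rightarrow> 'p set \<Rightarrow> real \<Rightarrow> ('y \<Rightarrow> real) set" where
  "level_tests \<nu> f \<Theta>0 \<alpha> = {\<phi>. is_test \<nu> \<phi> \<and> (\<forall>\<theta>\<in>\<Theta>0. rej_prob \<nu> \<phi> (f \<theta>) \<le> \<alpha>)}"

text \<open>Unit simplex, indexed by a finite type 'm (with CARD('m) = M1).\<close>
definition weight_simplex :: "('m::finite \<Rightarrow> real) set" where
  "weight_simplex = {\<omega>. (\<forall>j. 0 \<le> \<omega> j) \<and> sum \<omega> UNIV = 1}"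

definition gain :: "'y measure \<Rightarrow> ('p \<Rightarrow> 'y \<Rightarrow> real) \<Rightarrow> ('y \<Rightarrow> real) \<Rightarrow> ('m \<Rightarrow> 'p)
    \<Rightarrow> ('y \<Rightarrow> real) \<Rightarrow> 'm \<Rightarrow> real" where
  "gain \<nu> f \<phi>ah \<theta>s \<phi> j = rej_prob \<nu> (\<lambda>y. \<phi> y - \<phi>ah y) (f (\<theta>s j))"

definition Phi_star :: "'y measure \<Rightarrow> ('p \<Rightarrow> 'y \<Rightarrow> real) \<Rightarrow> 'p set \<Rightarrow> real \<Rightarrow> ('y \<Rightarrow> real)
    \<Rightarrow> ('m::finite \<Rightarrow> 'p) \<Rightarrow> ('y \<Rightarrow> real) set" where
  "Phi_star \<nu> f \<Theta>0 \<alpha> \<phi>ah \<theta>s =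
     {\<phi> \<in> level_tests \<nu> f \<Theta>0 \<alpha>. \<forall>\<psi> \<in> level_tests \<nu> f \<Theta>0 \<alpha>.
        Min (range (gain \<nu> f \<phi>ah \<theta>s \<psi>)) \<le> Min (range (gain \<nu> f \<phi>ah \<theta>s \<phi>))}"

definition wobj :: "'y measure \<Rightarrow> ('p \<Rightarrow> 'y \<Rightarrow> real) \<Rightarrow> ('y \<Rightarrow> real) \<Rightarrow> ('m::finite \<Rightarrow> 'p)
    \<Rightarrow> ('m \<Rightarrow> real) \<Rightarrow> ('y \<Rightarrow> real) \<Rightarrow> real" where
  "wobj \<nu> f \<phi>ah \<theta>s \<omega> \<phi> = (\<Sum>j\<in>UNIV. \<omega> j * gain \<nu> f \<phi>ah \<theta>s \<phi> j)"

definition Delta_star :: "'y measure \<Rightarrow> ('p \<Rightarrow> 'y \<Rightarrow> real) \<Rightarrow> 'p set \<Rightarrow> real \<Rightarrow> ('y \<Rightarrow> real)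
    \<Rightarrow> ('m::finite \<Rightarrow> 'p) \<Rightarrow> ('m \<Rightarrow> real) set" where
  "Delta_star \<nu> f \<Theta>0 \<alpha> \<phi>ah \<theta>s =
     {\<omega> \<in> weight_simplex. \<forall>\<omega>' \<in> weight_simplex.
        (SUP \<phi>\<in>level_tests \<nu> f \<Theta>0 \<alpha>. wobj \<nu> f \<phi>ah \<theta>s \<omega> \<phi>)
          \<le> (SUP \<phi>\<in>level_tests \<nu> f \<Theta>0 \<alpha>. wobj \<nu> f \<phi>ah \<theta>s \<omega>' \<phi>)}"

definition prob_on :: "'p::topological_space set \<Rightarrow> 'p measure \<Rightarrow> bool" where
  "prob_on \<Theta>0 \<Lambda> \<longleftrightarrow> prob_space \<Lambda> \<and> sets \<Lambda> = sets borel \<and> emeasure \<Lambda> \<Theta>0 = 1"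

definition mixture :: "'p measure \<Rightarrow> ('p \<Rightarrow> 'y \<Rightarrow> real) \<Rightarrow> 'y \<Rightarrow> real" where
  "mixture \<Lambda> f y = (LINT \<theta>|\<Lambda>. f \<theta> y)"

definition beta :: "'y measure \<Rightarrow> real \<Rightarrow> ('y \<Rightarrow> real) \<Rightarrow> ('y \<Rightarrow> real) \<Rightarrow> real" where
  "beta \<nu> \<alpha> g h = Sup {rej_prob \<nu> \<phi> g | \<phi>. is_test \<nu> \<phi> \<and> rej_prob \<nu> \<phi> h \<le> \<alpha>}"

definition least_favorable :: "'y measure \<Rightarrow> ('p::topological_space \<Rightarrow> 'y \<Rightarrow> real) \<Rightarrow> 'p set
    \<Rightarrow> real \<Rightarrow> ('y \<Rightarrow> real) \<Rightarrow> 'p measure \<Rightarrow> bool" where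
  "least_favorable \<nu> f \<Theta>0 \<alpha> g \<Lambda> \<longleftrightarrow>
     prob_on \<Theta>0 \<Lambda> \<and>
     (\<forall>\<Lambda>'. prob_on \<Theta>0 \<Lambda>' \<longrightarrow> beta \<nu> \<alpha> g (mixture \<Lambda> f) \<le> beta \<nu> \<alpha> g (mixture \<Lambda>' f))"

definition mix_alt :: "('p \<Rightarrow> 'y \<Rightarrow> real) \<Rightarrow> ('m::finite \<Rightarrow> 'p) \<Rightarrow> ('m \<Rightarrow> real) \<Rightarrow> 'y \<Rightarrow> real" where
  "mix_alt f \<theta>s \<omega> y = (\<Sum>j\<in>UNIV. \<omega> j * f (\<theta>s j) y)"

definition np_test :: "('y \<Rightarrow> real) \<Rightarrow> ('y \<Rightarrow> real) \<Rightarrow> real \<Rightarrow> real \<Rightarrow> 'y \<Rightarrow> real" where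
  "np_test g h cv \<kappa> y = (if g y > cv * h y then 1 else if g y = cv * h y then \<kappa> else 0)"

end

theory Submission
  imports Defs
begin


locale tsetup =
  fixes \<nu> :: "'y::metric_space measure"
    and f :: "'p::topological_space \<Rightarrow> 'y \<Rightarrow> real"
    and \<Theta> \<Theta>0 :: "'p set"
    and \<alpha> :: real
  assumes sets_nu: "sets \<nu> = sets borel"
    and sfin: "sigma_finite_measure \<nu>"
    and f_meas: "(\<lambda>(\<theta>, y). f \<theta> y) \<in> borel_measurable (borel \<Otimes>\<^sub>M borel)"
    and f_dens: "\<forall>\<theta>\<in>\<Theta>. (\<forall>y. 0 \<le> f \<theta> y) \<and> integrable \<nu> (f \<theta>) \<and> (LINT y|\<nu>. f \<theta> y) = 1"
    and sub0: "\<Theta>0 \<subseteq> \<Theta>"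
    and alpha: "0 < \<alpha>"
    and T0_borel: "\<Theta>0 \<in> sets borel"
begin

lemma meas_nu_eq: "borel_measurable \<nu> = borel_measurable borel"
  by (rule measurable_cong_sets[OF sets_nu refl])

lemma meas_nu_iff: "(g \<in> borel_measurable \<nu>) \<longleftrightarrow> (g \<in> borel_measurable borel)"
  using measurable_cong_sets[OF sets_nu refl] by blast

lemma f_meas_y: "f \<theta> \<in> borel_measurable \<nu>"
proof -
  have "(\<lambda>y. (\<lambda>(\<theta>, y). f \<theta> y) (\<theta>, y)) \<in> borel_measurable borel"
    using measurable_Pair2[OF f_meas] by simp
  then show ?thesis by (simp add: meas_nu_eq)
qed

lemma f_meas_theta: "(\<lambda>\<theta>. f \<theta> y) \<in> borel_measurable borel"
proof -
  have "(\<lambda>\<theta>. (\<lambda>(\<theta>, y). f \<theta> y) (\<theta>, y)) \<in> borel_measurable borel"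
    using measurable_Pair1[OF f_meas] by simp
  then show ?thesis by simp
qed

lemma f_nonneg: "\<theta> \<in> \<Theta> \<Longrightarrow> 0 \<le> f \<theta> y" using f_dens by auto
lemma f_int: "\<theta> \<in> \<Theta> \<Longrightarrow> integrable \<nu> (f \<theta>)" using f_dens by auto
lemma f_one: "\<theta> \<in> \<Theta> \<Longrightarrow> (LINT y|\<nu>. f \<theta> y) = 1" using f_dens by auto

lemma test_meas: "is_test \<nu> \<phi> \<Longrightarrow> \<phi> \<in> borel_measurable \<nu>" by (simp add: is_test_def)
lemma test_bd: "is_test \<nu> \<phi> \<Longrightarrow> 0 \<le> \<phi> y \<and> \<phi> y \<le> 1" by (simp add: is_test_def)

lemma int_bdd_mult:
  fixes d \<phi> :: "'y \<Rightarrow> real" and B :: real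
  assumes "integrable \<nu> d" "\<phi> \<in> borel_measurable \<nu>" "\<And>y. \<bar>\<phi> y\<bar> \<le> B"
  shows "integrable \<nu> (\<lambda>y. \<phi> y * d y)"
proof -
  have i: "integrable \<nu> (\<lambda>y. B * \<bar>d y\<bar>)" using assms(1) by (intro integrable_mult_right integrable_abs)
  have B: "0 \<le> B" using assms(3)[of undefined] by linarith
  show ?thesis
  proof (rule Bochner_Integration.integrable_bound[OF i])
    show "(\<lambda>y. \<phi> y * d y) \<in> borel_measurable \<nu>" using assms(1,2) by measurable
    show "AE y in \<nu>. norm (\<phi> y * d y) \<le> norm (B * \<bar>d y\<bar>)"
      using assms(3) B by (auto simp: abs_mult intro!: mult_right_mono)
  qed
qed

definition "Hn \<Lambda> y = (\<integral>\<^sup>+\<theta>. ennreal (f \<theta> y) \<partial>\<Lambda>)"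

lemma po_sets: "prob_on \<Theta>0 \<Lambda> \<Longrightarrow> sets \<Lambda> = sets borel" by (simp add: prob_on_def)
lemma po_ps: "prob_on \<Theta>0 \<Lambda> \<Longrightarrow> prob_space \<Lambda>" by (simp add: prob_on_def)

lemma po_AE: assumes "prob_on \<Theta>0 \<Lambda>" shows "AE \<theta> in \<Lambda>. \<theta> \<in> \<Theta>0"
proof -
  interpret prob_space \<Lambda> using po_ps[OF assms] .
  have ev: "\<Theta>0 \<in> sets \<Lambda>" using po_sets[OF assms] T0_borel by simp
  have "prob \<Theta>0 = 1" using assms by (simp add: prob_on_def emeasure_eq_measure)
  then show ?thesis using AE_in_set_eq_1[OF ev] by simp
qed

lemma f_meas_theta_L: "prob_on \<Theta>0 \<Lambda> \<Longrightarrow> (\<lambda>\<theta>. f \<theta> y) \<in> borel_measurable \<Lambda>"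
  using f_meas_theta measurable_cong_sets[OF po_sets refl] by blast

lemma mixture_eq: assumes "prob_on \<Theta>0 \<Lambda>" shows "mixture \<Lambda> f y = enn2real (Hn \<Lambda> y)"
  unfolding mixture_def Hn_def
  apply (rule integral_eq_nn_integral[OF f_meas_theta_L[OF assms]])
  using po_AE[OF assms] apply eventually_elim
  using sub0 f_nonneg by auto

lemma mixture_nonneg: "prob_on \<Theta>0 \<Lambda> \<Longrightarrow> 0 \<le> mixture \<Lambda> f y"
  by (simp add: mixture_eq)

lemma pair_sf: "prob_on \<Theta>0 \<Lambda> \<Longrightarrow> pair_sigma_finite \<Lambda> \<nu>"
  unfolding pair_sigma_finite_def using sfin po_ps prob_space_imp_sigma_finite by blast

lemma sets_pairL: "prob_on \<Theta>0 \<Lambda> \<Longrightarrow> sets (\<Lambda> \<Otimes>\<^sub>M \<nu>) = sets (borel \<Otimes>\<^sub>M borel)"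
  by (rule sets_pair_measure_cong[OF po_sets sets_nu])

lemma Hn_meas: assumes "prob_on \<Theta>0 \<Lambda>" shows "Hn \<Lambda> \<in> borel_measurable \<nu>"
proof -
  interpret sigma_finite_measure \<Lambda> using po_ps[OF assms] prob_space_imp_sigma_finite by blast
  have "(\<lambda>(y, \<theta>). f \<theta> y) \<in> borel_measurable (borel \<Otimes>\<^sub>M borel)"
    using measurable_compose[OF measurable_pair_swap' f_meas] by (simp add: case_prod_beta)
  then have "(\<lambda>(y, \<theta>). f \<theta> y) \<in> borel_measurable (\<nu> \<Otimes>\<^sub>M \<Lambda>)"
    using measurable_cong_sets[OF sets_pair_measure_cong[OF sets_nu po_sets[OF assms]] refl] by blast
  then have "case_prod (\<lambda>y \<theta>. ennreal (f \<theta> y)) \<in> borel_measurable (\<nu> \<Otimes>\<^sub>M \<Lambda>)"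
    by (simp add: case_prod_beta')
  from borel_measurable_nn_integral[OF this] show ?thesis unfolding Hn_def .
qed

lemma tonelli:
  assumes L: "prob_on \<Theta>0 \<Lambda>" and psi: "\<psi> \<in> borel_measurable \<nu>" "\<And>y. 0 \<le> \<psi> y"
  shows "(\<integral>\<^sup>+y. ennreal (\<psi> y) * Hn \<Lambda> y \<partial>\<nu>) = (\<integral>\<^sup>+\<theta>. (\<integral>\<^sup>+y. ennreal (\<psi> y * f \<theta> y) \<partial>\<nu>) \<partial>\<Lambda>)"
proof -
  interpret pair_sigma_finite \<Lambda> \<nu> using pair_sf[OF L] .
  have "(\<lambda>(\<theta>, y). \<psi> y * f \<theta> y) \<in> borel_measurable (borel \<Otimes>\<^sub>M borel)"
  proof -
    have "(\<lambda>(\<theta>, y). \<psi> y) \<in> borel_measurable (borel \<Otimes>\<^sub>M borel)"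
    proof -
      have "\<psi> \<in> borel_measurable borel" using psi(1) meas_nu_iff by blast
      then have "(\<lambda>x. \<psi> (snd x)) \<in> borel_measurable (borel \<Otimes>\<^sub>M borel)"
        by (rule measurable_compose[OF measurable_snd])
      then show ?thesis by (simp add: case_prod_beta')
    qed
    then show ?thesis using f_meas by (auto simp: case_prod_beta' intro!: borel_measurable_times)
  qed
  then have "(\<lambda>(\<theta>, y). \<psi> y * f \<theta> y) \<in> borel_measurable (\<Lambda> \<Otimes>\<^sub>M \<nu>)"
    using measurable_cong_sets[OF sets_pairL[OF L] refl] by blast
  then have m: "case_prod (\<lambda>\<theta> y. ennreal (\<psi> y * f \<theta> y)) \<in> borel_measurable (\<Lambda> \<Otimes>\<^sub>M \<nu>)"
    by (simp add: case_prod_beta')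
  have "(\<integral>\<^sup>+y. ennreal (\<psi> y) * Hn \<Lambda> y \<partial>\<nu>) = (\<integral>\<^sup>+y. (\<integral>\<^sup>+\<theta>. ennreal (\<psi> y * f \<theta> y) \<partial>\<Lambda>) \<partial>\<nu>)"
  proof (rule nn_integral_cong)
    fix y
    have "ennreal (\<psi> y) * Hn \<Lambda> y = (\<integral>\<^sup>+\<theta>. ennreal (\<psi> y) * ennreal (f \<theta> y) \<partial>\<Lambda>)"
      unfolding Hn_def by (rule nn_integral_cmult[symmetric]) (use f_meas_theta_L[OF L] in simp)
    also have "\<dots> = (\<integral>\<^sup>+\<theta>. ennreal (\<psi> y * f \<theta> y) \<partial>\<Lambda>)"
      using psi(2) by (simp add: ennreal_mult')
    finally show "ennreal (\<psi> y) * Hn \<Lambda> y = (\<integral>\<^sup>+\<theta>. ennreal (\<psi> y * f \<theta> y) \<partial>\<Lambda>)" .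
  qed
  also have "\<dots> = (\<integral>\<^sup>+\<theta>. (\<integral>\<^sup>+y. ennreal (\<psi> y * f \<theta> y) \<partial>\<nu>) \<partial>\<Lambda>)"
    by (rule Fubini'[OF m])
  finally show ?thesis .
qed

lemma inner_one: assumes "\<theta> \<in> \<Theta>" and psi: "is_test \<nu> \<psi>"
  shows "(\<integral>\<^sup>+y. ennreal (\<psi> y * f \<theta> y) \<partial>\<nu>) = ennreal (rej_prob \<nu> \<psi> (f \<theta>))"
  unfolding rej_prob_def
  apply (rule nn_integral_eq_integral)
   apply (rule int_bdd_mult[OF f_int[OF assms(1)] test_meas[OF psi], of 1])
  using test_bd[OF psi] apply force
  using test_bd[OF psi] f_nonneg[OF assms(1)] by simp

lemma test_one: "is_test \<nu> (\<lambda>y. 1)" unfolding is_test_def by simp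

lemma Hn_int1: assumes L: "prob_on \<Theta>0 \<Lambda>" shows "(\<integral>\<^sup>+y. Hn \<Lambda> y \<partial>\<nu>) = 1"
proof -
  have "(\<integral>\<^sup>+y. Hn \<Lambda> y \<partial>\<nu>) = (\<integral>\<^sup>+y. ennreal 1 * Hn \<Lambda> y \<partial>\<nu>)" by simp
  also have "\<dots> = (\<integral>\<^sup>+\<theta>. (\<integral>\<^sup>+y. ennreal (1 * f \<theta> y) \<partial>\<nu>) \<partial>\<Lambda>)"
    by (rule tonelli[OF L]) auto
  also have "\<dots> = (\<integral>\<^sup>+\<theta>. 1 \<partial>\<Lambda>)"
  proof (rule nn_integral_cong_AE)
    show "AE \<theta> in \<Lambda>. (\<integral>\<^sup>+y. ennreal (1 * f \<theta> y) \<partial>\<nu>) = 1"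
      using po_AE[OF L] proof eventually_elim
      case (elim \<theta>)
      then have "\<theta> \<in> \<Theta>" using sub0 by auto
      from inner_one[OF this test_one] f_one[OF this] show ?case by (simp add: rej_prob_def)
    qed
  qed
  also have "\<dots> = 1" using po_ps[OF L] prob_space.emeasure_space_1 by simp
  finally show ?thesis .
qed

lemma Hn_fin: assumes L: "prob_on \<Theta>0 \<Lambda>" shows "AE y in \<nu>. Hn \<Lambda> y \<noteq> \<infinity>"
  by (rule nn_integral_PInf_AE[OF Hn_meas[OF L]]) (simp add: Hn_int1[OF L])

lemma Hn_eq: assumes L: "prob_on \<Theta>0 \<Lambda>" shows "AE y in \<nu>. Hn \<Lambda> y = ennreal (mixture \<Lambda> f y)"
  using Hn_fin[OF L] by eventually_elim (simp add: mixture_eq[OF L] less_top)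

lemma mix_meas: assumes L: "prob_on \<Theta>0 \<Lambda>" shows "mixture \<Lambda> f \<in> borel_measurable \<nu>"
proof -
  have "(\<lambda>y. enn2real (Hn \<Lambda> y)) \<in> borel_measurable \<nu>" using Hn_meas[OF L] by measurable
  moreover have "mixture \<Lambda> f = (\<lambda>y. enn2real (Hn \<Lambda> y))" by (rule ext) (simp add: mixture_eq[OF L])
  ultimately show ?thesis by simp
qed

lemma mix_nn: assumes L: "prob_on \<Theta>0 \<Lambda>" shows "(\<integral>\<^sup>+y. ennreal (mixture \<Lambda> f y) \<partial>\<nu>) = 1"
proof -
  have "(\<integral>\<^sup>+y. ennreal (mixture \<Lambda> f y) \<partial>\<nu>) = (\<integral>\<^sup>+y. Hn \<Lambda> y \<partial>\<nu>)"
    apply (rule nn_integral_cong_AE) using Hn_eq[OF L] by auto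
  then show ?thesis using Hn_int1[OF L] by simp
qed

lemma mix_int: assumes L: "prob_on \<Theta>0 \<Lambda>" shows "integrable \<nu> (mixture \<Lambda> f)"
  by (rule integrableI_nonneg[OF mix_meas[OF L]]) (auto simp: mix_nn[OF L] mixture_nonneg[OF L])

lemma level_mix:
  assumes L: "prob_on \<Theta>0 \<Lambda>" and psi: "is_test \<nu> \<psi>" and lev: "\<forall>\<theta>\<in>\<Theta>0. rej_prob \<nu> \<psi> (f \<theta>) \<le> \<alpha>"
  shows "rej_prob \<nu> \<psi> (mixture \<Lambda> f) \<le> \<alpha>"
proof -
  have m: "(\<lambda>y. \<psi> y * mixture \<Lambda> f y) \<in> borel_measurable \<nu>"
    using test_meas[OF psi] mix_meas[OF L] by measurable
  have eq1: "rej_prob \<nu> \<psi> (mixture \<Lambda> f) = enn2real (\<integral>\<^sup>+y. ennreal (\<psi> y * mixture \<Lambda> f y) \<partial>\<nu>)"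
    unfolding rej_prob_def
    by (rule integral_eq_nn_integral[OF m]) (use test_bd[OF psi] mixture_nonneg[OF L] in simp)
  have "(\<integral>\<^sup>+y. ennreal (\<psi> y * mixture \<Lambda> f y) \<partial>\<nu>) = (\<integral>\<^sup>+y. ennreal (\<psi> y) * Hn \<Lambda> y \<partial>\<nu>)"
    apply (rule nn_integral_cong_AE) using Hn_eq[OF L] apply eventually_elim
    using test_bd[OF psi] by (simp add: ennreal_mult')
  also have "\<dots> = (\<integral>\<^sup>+\<theta>. (\<integral>\<^sup>+y. ennreal (\<psi> y * f \<theta> y) \<partial>\<nu>) \<partial>\<Lambda>)"
    by (rule tonelli[OF L test_meas[OF psi]]) (use test_bd[OF psi] in simp)
  also have "\<dots> \<le> (\<integral>\<^sup>+\<theta>. ennreal \<alpha> \<partial>\<Lambda>)"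
  proof (rule nn_integral_mono_AE)
    show "AE \<theta> in \<Lambda>. (\<integral>\<^sup>+y. ennreal (\<psi> y * f \<theta> y) \<partial>\<nu>) \<le> ennreal \<alpha>"
      using po_AE[OF L] proof eventually_elim
      case (elim \<theta>)
      then have "\<theta> \<in> \<Theta>" using sub0 by auto
      from inner_one[OF this psi] lev elim show ?case by (simp add: ennreal_leI)
    qed
  qed
  also have "\<dots> = ennreal \<alpha>" using prob_space.emeasure_space_1[OF po_ps[OF L]] by simp
  finally show ?thesis
    using alpha eq1 by (auto intro: enn2real_leI)
qed

definition "mixm \<Lambda> \<theta>0 t = Giry_Monad.bind (measure_pmf (bernoulli_pmf t)) (\<lambda>b. if b then return borel \<theta>0 else \<Lambda>)"

lemma mixm_A: "measure_pmf (bernoulli_pmf t) \<in> space (prob_algebra (count_space UNIV))"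
  by (simp add: space_prob_algebra measure_pmf.prob_space_axioms)

lemma mixm_B: assumes L: "prob_on \<Theta>0 \<Lambda>"
  shows "(\<lambda>b. if b then return borel \<theta>0 else \<Lambda>) \<in> count_space UNIV \<rightarrow>\<^sub>M prob_algebra borel"
  using L by (auto simp: space_prob_algebra prob_space_return po_sets po_ps)

lemma mixm_B': assumes L: "prob_on \<Theta>0 \<Lambda>"
  shows "(\<lambda>b. if b then return borel \<theta>0 else \<Lambda>) \<in> measure_pmf (bernoulli_pmf t) \<rightarrow>\<^sub>M subprob_algebra borel"
  using L by (auto simp: space_subprob_algebra prob_space_return po_sets po_ps prob_space_imp_subprob_space)

lemma mixm_po: assumes L: "prob_on \<Theta>0 \<Lambda>" and th: "\<theta>0 \<in> \<Theta>0" and t: "0 \<le> t" "t \<le> 1"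
  shows "prob_on \<Theta>0 (mixm \<Lambda> \<theta>0 t)"
  unfolding prob_on_def
proof (intro conjI)
  show "prob_space (mixm \<Lambda> \<theta>0 t)" unfolding mixm_def by (rule prob_space_bind'[OF mixm_A mixm_B[OF L]])
  show "sets (mixm \<Lambda> \<theta>0 t) = sets borel" unfolding mixm_def by (rule sets_bind'[OF mixm_A mixm_B[OF L]])
  have "emeasure (mixm \<Lambda> \<theta>0 t) \<Theta>0 = (\<integral>\<^sup>+b. emeasure (if b then return borel \<theta>0 else \<Lambda>) \<Theta>0 \<partial>measure_pmf (bernoulli_pmf t))"
    unfolding mixm_def by (rule emeasure_bind_prob_algebra[OF mixm_A mixm_B[OF L] T0_borel])
  also have "\<dots> = 1" using t th L T0_borel by (simp add: prob_on_def ennreal_plus[symmetric] del: ennreal_plus)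
  finally show "emeasure (mixm \<Lambda> \<theta>0 t) \<Theta>0 = 1" .
qed

lemma mixm_Hn: assumes L: "prob_on \<Theta>0 \<Lambda>" and t: "0 \<le> t" "t \<le> 1"
  shows "Hn (mixm \<Lambda> \<theta>0 t) y = ennreal (f \<theta>0 y) * ennreal t + Hn \<Lambda> y * ennreal (1 - t)"
proof -
  have "Hn (mixm \<Lambda> \<theta>0 t) y = (\<integral>\<^sup>+b. (\<integral>\<^sup>+\<theta>. ennreal (f \<theta> y) \<partial>(if b then return borel \<theta>0 else \<Lambda>)) \<partial>measure_pmf (bernoulli_pmf t))"
    unfolding Hn_def mixm_def
    by (rule nn_integral_bind[OF _ mixm_B'[OF L]]) (use f_meas_theta in measurable)
  also have "\<dots> = ennreal (f \<theta>0 y) * ennreal t + Hn \<Lambda> y * ennreal (1 - t)"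
  proof -
    have "(\<integral>\<^sup>+\<theta>. ennreal (f \<theta> y) \<partial>return borel \<theta>0) = ennreal (f \<theta>0 y)"
      by (rule nn_integral_return) (use f_meas_theta in auto)
    then show ?thesis using t by (simp add: Hn_def)
  qed
  finally show ?thesis .
qed

lemma mixm_mix: assumes L: "prob_on \<Theta>0 \<Lambda>" and th: "\<theta>0 \<in> \<Theta>0" and t: "0 \<le> t" "t \<le> 1"
  shows "AE y in \<nu>. mixture (mixm \<Lambda> \<theta>0 t) f y = t * f \<theta>0 y + (1 - t) * mixture \<Lambda> f y"
  using Hn_eq[OF L] proof eventually_elim
  case (elim y)
  have "0 \<le> f \<theta>0 y" using th sub0 f_nonneg by auto
  then show ?case
    unfolding mixture_eq[OF mixm_po[OF L th t]] mixm_Hn[OF L t] elim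
    using t mixture_nonneg[OF L, of y]
    by (simp add: ennreal_mult'[symmetric] ennreal_plus[symmetric] del: ennreal_plus)
qed

lemma perturb:
  fixes a b :: "'y \<Rightarrow> real"
  assumes ia: "integrable \<nu> a" and ib: "integrable \<nu> b" and nz: "AE y in \<nu>. a y \<noteq> 0"
    and gt: "(LINT y|\<nu>. (if a y > 0 then b y else 0)) > d" and eps: "\<epsilon> > 0"
  shows "\<exists>s. 0 < s \<and> s < \<epsilon> \<and> (LINT y|\<nu>. max 0 (a y - s * b y)) + s * d < (LINT y|\<nu>. max 0 (a y))"
proof -
  define sn :: "nat \<Rightarrow> real" where "sn n = 1 / Suc n" for n
  have sn_pos: "0 < sn n" for n by (simp add: sn_def)
  have sn_lim: "sn \<longlonglongrightarrow> 0" unfolding sn_def by (rule LIMSEQ_Suc[OF lim_const_over_n])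
  define I where "I = (LINT y|\<nu>. (if a y > 0 then b y else 0))"
  define R where "R n y = (max 0 (a y - sn n * b y) - max 0 (a y) + sn n * (if a y > 0 then b y else 0)) / sn n" for n y
  have [measurable]: "a \<in> borel_measurable \<nu>" "b \<in> borel_measurable \<nu>" using ia ib by auto
  have iI: "integrable \<nu> (\<lambda>y. if a y > 0 then b y else 0)"
    by (rule Bochner_Integration.integrable_bound[OF integrable_abs[OF ib]]) auto
  have i1: "integrable \<nu> (\<lambda>y. max 0 (a y - sn n * b y))" for n
    using ia ib by (intro integrable_max integrable_diff integrable_mult_right) auto
  have i2: "integrable \<nu> (\<lambda>y. max 0 (a y))"
    using ia by (intro integrable_max) auto
  have Rint: "(LINT y|\<nu>. R n y) = ((LINT y|\<nu>. max 0 (a y - sn n * b y)) - (LINT y|\<nu>. max 0 (a y)) + sn n * I) / sn n" for n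
    unfolding R_def I_def
    using i1[of n] i2 iI by (simp add: Bochner_Integration.integral_diff Bochner_Integration.integral_add)
  have Rbd: "\<bar>R n y\<bar> \<le> \<bar>b y\<bar>" for n y
  proof -
    have s: "0 < sn n" by (rule sn_pos)
    have "\<bar>max 0 (a y - sn n * b y) - max 0 (a y) + sn n * (if a y > 0 then b y else 0)\<bar> \<le> sn n * \<bar>b y\<bar>"
    proof -
      have c0: "\<bar>sn n * b y\<bar> = sn n * \<bar>b y\<bar>" using s by (simp add: abs_mult)
      have c1: "sn n * b y \<le> sn n * \<bar>b y\<bar>" "- (sn n * \<bar>b y\<bar>) \<le> sn n * b y"
        using c0 abs_ge_self[of "sn n * b y"] abs_ge_minus_self[of "sn n * b y"] by linarith+
      have *: "\<bar>max 0 (a y - c) - max 0 (a y) + (if a y > 0 then c else 0)\<bar> \<le> C"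
        if "c \<le> C" "-C \<le> c" for c C
        using that by (auto simp: max_def abs_le_iff)
      have e: "sn n * (if a y > 0 then b y else 0) = (if a y > 0 then sn n * b y else 0)" by simp
      show ?thesis unfolding e by (rule *[OF c1])
    qed
    then have "\<bar>max 0 (a y - sn n * b y) - max 0 (a y) + sn n * (if a y > 0 then b y else 0)\<bar> / sn n \<le> \<bar>b y\<bar>"
      using s by (subst divide_le_eq) (auto simp: mult.commute)
    then show ?thesis unfolding R_def abs_divide abs_of_pos[OF s] .
  qed
  have Rlim: "AE y in \<nu>. (\<lambda>n. R n y) \<longlonglongrightarrow> 0"
    using nz proof eventually_elim
    case (elim y)
    have "(\<lambda>n. sn n * \<bar>b y\<bar>) \<longlonglongrightarrow> 0 * \<bar>b y\<bar>" by (intro tendsto_mult sn_lim tendsto_const)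
    then have "eventually (\<lambda>n. sn n * \<bar>b y\<bar> < \<bar>a y\<bar>) sequentially"
      using elim by (intro order_tendstoD(2)) auto
    then have "eventually (\<lambda>n. R n y = 0) sequentially"
    proof (rule eventually_mono)
      fix n assume h: "sn n * \<bar>b y\<bar> < \<bar>a y\<bar>"
      have c0: "\<bar>sn n * b y\<bar> = sn n * \<bar>b y\<bar>" using sn_pos[of n] by (simp add: abs_mult)
      have "sn n * b y \<le> sn n * \<bar>b y\<bar>" "- (sn n * \<bar>b y\<bar>) \<le> sn n * b y"
        using c0 abs_ge_self[of "sn n * b y"] abs_ge_minus_self[of "sn n * b y"] by linarith+
      note c1 = this
      have *: "max 0 (a y - c) - max 0 (a y) + (if a y > 0 then c else 0) = 0"
        if "c \<le> C" "-C \<le> c" "C < \<bar>a y\<bar>" for c C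
        using that by (auto simp: max_def abs_if)
      have e: "sn n * (if a y > 0 then b y else 0) = (if a y > 0 then sn n * b y else 0)" by simp
      show "R n y = 0" unfolding R_def e *[OF c1 h] by simp
    qed
    then show ?case by (rule tendsto_eventually)
  qed
  have "(\<lambda>n. LINT y|\<nu>. R n y) \<longlonglongrightarrow> (LINT y|\<nu>. 0)"
  proof (rule integral_dominated_convergence[OF _ _ integrable_abs[OF ib] Rlim])
    show "(\<lambda>y. 0::real) \<in> borel_measurable \<nu>" by simp
    show "(\<lambda>y. R n y) \<in> borel_measurable \<nu>" for n unfolding R_def by measurable
    show "AE y in \<nu>. norm (R n y) \<le> \<bar>b y\<bar>" for n using Rbd by simp
  qed
  then have lim: "(\<lambda>n. LINT y|\<nu>. R n y) \<longlonglongrightarrow> 0" by simp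
  have "I - d > 0" using gt I_def by simp
  then have e1: "eventually (\<lambda>n. (LINT y|\<nu>. R n y) < I - d) sequentially"
    using lim by (intro order_tendstoD(2)) auto
  have e2: "eventually (\<lambda>n. sn n < \<epsilon>) sequentially"
    using sn_lim eps by (intro order_tendstoD(2)) auto
  obtain n where n1: "(LINT y|\<nu>. R n y) < I - d" and n2: "sn n < \<epsilon>"
  proof -
    from eventually_conj[OF e1 e2] obtain N where "\<forall>n\<ge>N. (LINT y|\<nu>. R n y) < I - d \<and> sn n < \<epsilon>"
      unfolding eventually_sequentially by blast
    then show thesis using that by blast
  qed
  have "((LINT y|\<nu>. max 0 (a y - sn n * b y)) - (LINT y|\<nu>. max 0 (a y)) + sn n * I) / sn n < I - d"
    using n1 Rint by simp
  then have "(LINT y|\<nu>. max 0 (a y - sn n * b y)) - (LINT y|\<nu>. max 0 (a y)) + sn n * I < sn n * (I - d)"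
    using sn_pos[of n] by (simp add: divide_less_eq mult.commute)
  then have "(LINT y|\<nu>. max 0 (a y - sn n * b y)) + sn n * d < (LINT y|\<nu>. max 0 (a y))"
    by (simp add: algebra_simps)
  then show ?thesis using sn_pos[of n] n2 by blast
qed


lemma test_zero: "is_test \<nu> (\<lambda>y. 0)" unfolding is_test_def by simp

lemma test_int: "is_test \<nu> \<phi> \<Longrightarrow> integrable \<nu> d \<Longrightarrow> integrable \<nu> (\<lambda>y. \<phi> y * d y)"
proof (rule int_bdd_mult[of d \<phi> 1])
  fix y assume "is_test \<nu> \<phi>" then show "\<bar>\<phi> y\<bar> \<le> 1" using test_bd[of \<phi> y] by auto
qed (auto dest: test_meas)

lemma rej_le_int: assumes "is_test \<nu> \<phi>" "integrable \<nu> g" "\<And>y. 0 \<le> g y"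
  shows "rej_prob \<nu> \<phi> g \<le> (LINT y|\<nu>. g y)"
  unfolding rej_prob_def
  using test_bd[OF assms(1)] assms(3)
  by (intro integral_mono test_int assms) (auto intro: mult_left_le_one_le)

lemma beta_lower:
  assumes "is_test \<nu> \<phi>" "rej_prob \<nu> \<phi> hm \<le> \<alpha>" "integrable \<nu> g" "\<And>y. 0 \<le> g y"
  shows "rej_prob \<nu> \<phi> g \<le> beta \<nu> \<alpha> g hm"
  unfolding beta_def
proof (rule cSup_upper)
  show "rej_prob \<nu> \<phi> g \<in> {rej_prob \<nu> \<phi> g |\<phi>. is_test \<nu> \<phi> \<and> rej_prob \<nu> \<phi> hm \<le> \<alpha>}"
    using assms by blast
  show "bdd_above {rej_prob \<nu> \<phi> g |\<phi>. is_test \<nu> \<phi> \<and> rej_prob \<nu> \<phi> hm \<le> \<alpha>}"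
    using rej_le_int[OF _ assms(3,4)] by (auto intro!: bdd_aboveI[where M="LINT y|\<nu>. g y"])
qed

lemma beta_upper:
  assumes L: "prob_on \<Theta>0 L" and g: "integrable \<nu> g" and h': "integrable \<nu> h'"
    and ae: "AE y in \<nu>. mixture L f y = h' y" and c: "0 \<le> c"
  shows "beta \<nu> \<alpha> g (mixture L f) \<le> (LINT y|\<nu>. max 0 (g y - c * h' y)) + c * \<alpha>"
  unfolding beta_def
proof (rule cSup_least)
  show "{rej_prob \<nu> \<phi> g |\<phi>. is_test \<nu> \<phi> \<and> rej_prob \<nu> \<phi> (mixture L f) \<le> \<alpha>} \<noteq> {}"
    using test_zero alpha by (auto simp: rej_prob_def intro!: exI[of _ "\<lambda>y. 0"])
  fix x assume "x \<in> {rej_prob \<nu> \<phi> g |\<phi>. is_test \<nu> \<phi> \<and> rej_prob \<nu> \<phi> (mixture L f) \<le> \<alpha>}"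
  then obtain \<phi> where t: "is_test \<nu> \<phi>" and lev: "rej_prob \<nu> \<phi> (mixture L f) \<le> \<alpha>" and x: "x = rej_prob \<nu> \<phi> g"
    by blast
  have "rej_prob \<nu> \<phi> (mixture L f) = (LINT y|\<nu>. \<phi> y * h' y)"
    unfolding rej_prob_def by (rule integral_cong_AE) (use ae test_meas[OF t] mix_meas[OF L] h' in auto)
  with lev have lev': "(LINT y|\<nu>. \<phi> y * h' y) \<le> \<alpha>" by simp
  have i1: "integrable \<nu> (\<lambda>y. \<phi> y * g y)" "integrable \<nu> (\<lambda>y. \<phi> y * h' y)"
    using test_int[OF t] g h' by auto
  have i2: "integrable \<nu> (\<lambda>y. max 0 (g y - c * h' y))"
    using g h' by (intro integrable_max integrable_diff integrable_mult_right) auto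
  have "x = (LINT y|\<nu>. \<phi> y * g y - c * (\<phi> y * h' y)) + c * (LINT y|\<nu>. \<phi> y * h' y)"
    unfolding x rej_prob_def using i1 by (simp add: Bochner_Integration.integral_diff)
  also have "\<dots> \<le> (LINT y|\<nu>. max 0 (g y - c * h' y)) + c * \<alpha>"
  proof (rule add_mono)
    show "c * (LINT y|\<nu>. \<phi> y * h' y) \<le> c * \<alpha>" using lev' c by (rule mult_left_mono)
    show "(LINT y|\<nu>. \<phi> y * g y - c * (\<phi> y * h' y)) \<le> (LINT y|\<nu>. max 0 (g y - c * h' y))"
    proof (rule integral_mono)
      show "integrable \<nu> (\<lambda>y. \<phi> y * g y - c * (\<phi> y * h' y))" using i1 by auto
      show "integrable \<nu> (\<lambda>y. max 0 (g y - c * h' y))" by (rule i2)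
      fix y
      have "\<phi> y * g y - c * (\<phi> y * h' y) = \<phi> y * (g y - c * h' y)" by (simp add: algebra_simps)
      also have "\<dots> \<le> max 0 (g y - c * h' y)"
        using test_bd[OF t, of y] by (cases "g y - c * h' y \<ge> 0") (auto intro: mult_left_le_one_le mult_nonneg_nonpos)
      finally show "\<phi> y * g y - c * (\<phi> y * h' y) \<le> max 0 (g y - c * h' y)" .
    qed
  qed
  finally show "x \<le> (LINT y|\<nu>. max 0 (g y - c * h' y)) + c * \<alpha>" .
qed


lemma np_main:
  assumes gi: "integrable \<nu> g" and gnn: "\<And>y. 0 \<le> g y"
    and LF: "least_favorable \<nu> f \<Theta>0 \<alpha> g \<Lambda>"
    and c: "0 \<le> c" and k: "0 \<le> \<kappa>" "\<kappa> \<le> 1"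
    and size: "rej_prob \<nu> (np_test g (mixture \<Lambda> f) c \<kappa>) (mixture \<Lambda> f) = \<alpha>"
    and bd: "emeasure \<nu> {y. g y = c * mixture \<Lambda> f y} = 0"
  shows "np_test g (mixture \<Lambda> f) c \<kappa> \<in> level_tests \<nu> f \<Theta>0 \<alpha>
     \<and> (\<forall>\<psi>\<in>level_tests \<nu> f \<Theta>0 \<alpha>. rej_prob \<nu> \<psi> g \<le> rej_prob \<nu> (np_test g (mixture \<Lambda> f) c \<kappa>) g)
     \<and> (\<forall>\<psi>\<in>level_tests \<nu> f \<Theta>0 \<alpha>. rej_prob \<nu> \<psi> g = rej_prob \<nu> (np_test g (mixture \<Lambda> f) c \<kappa>) g
           \<longrightarrow> (AE y in \<nu>. \<psi> y = np_test g (mixture \<Lambda> f) c \<kappa> y))"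
proof -
  have L: "prob_on \<Theta>0 \<Lambda>" using LF by (simp add: least_favorable_def)
  define h where "h = mixture \<Lambda> f"
  define \<phi>0 where "\<phi>0 = np_test g h c \<kappa>"
  define a where "a y = g y - c * h y" for y
  have [measurable]: "g \<in> borel_measurable \<nu>" "h \<in> borel_measurable \<nu>"
    using gi mix_meas[OF L] by (auto simp: h_def)
  have hi: "integrable \<nu> h" using mix_int[OF L] by (simp add: h_def)
  have ai: "integrable \<nu> a" unfolding a_def using gi hi by auto
  have t0: "is_test \<nu> \<phi>0" unfolding is_test_def \<phi>0_def np_test_def using k by auto
  have size': "rej_prob \<nu> \<phi>0 h = \<alpha>" using size by (simp add: \<phi>0_def h_def)
  have pos: "\<phi>0 y * a y = max 0 (a y)" for y
    unfolding \<phi>0_def np_test_def a_def by auto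
  have nz: "AE y in \<nu>. a y \<noteq> 0"
  proof (rule AE_I')
    have "{y. g y = c * h y} = {y \<in> space \<nu>. g y = c * h y}"
      using sets_eq_imp_space_eq[OF sets_nu] by simp
    also have "\<dots> \<in> sets \<nu>" by measurable
    finally show "{y. g y = c * mixture \<Lambda> f y} \<in> null_sets \<nu>"
      using bd by (simp add: null_sets_def h_def)
    show "{y \<in> space \<nu>. \<not> a y \<noteq> 0} \<subseteq> {y. g y = c * mixture \<Lambda> f y}" by (auto simp: a_def h_def)
  qed
  have phi_ind: "AE y in \<nu>. \<phi>0 y = (if a y > 0 then 1 else 0)"
    using nz by eventually_elim (auto simp: \<phi>0_def np_test_def a_def)
  have i_phi: "integrable \<nu> (\<lambda>y. \<phi>0 y * d y)" if "integrable \<nu> d" for d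
    by (rule test_int[OF t0 that])
  have rg: "rej_prob \<nu> \<phi>0 g = (LINT y|\<nu>. max 0 (a y)) + c * \<alpha>"
  proof -
    have "rej_prob \<nu> \<phi>0 g = (LINT y|\<nu>. \<phi>0 y * a y + c * (\<phi>0 y * h y))"
      unfolding rej_prob_def a_def by (simp add: algebra_simps)
    also have "\<dots> = (LINT y|\<nu>. \<phi>0 y * a y) + c * rej_prob \<nu> \<phi>0 h"
      unfolding rej_prob_def using i_phi[OF ai] i_phi[OF hi] by simp
    finally show ?thesis using size' pos by simp
  qed
  have betaL: "rej_prob \<nu> \<phi>0 g \<le> beta \<nu> \<alpha> g h"
    by (rule beta_lower[OF t0 _ gi gnn]) (simp add: size')
  have lev: "\<forall>\<theta>\<in>\<Theta>0. rej_prob \<nu> \<phi>0 (f \<theta>) \<le> \<alpha>"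
  proof (rule ballI, rule ccontr)
    fix \<theta>0 assume th: "\<theta>0 \<in> \<Theta>0" and "\<not> rej_prob \<nu> \<phi>0 (f \<theta>0) \<le> \<alpha>"
    then have gt: "rej_prob \<nu> \<phi>0 (f \<theta>0) > \<alpha>" by simp
    have f0i: "integrable \<nu> (f \<theta>0)" using th sub0 f_int by auto
    have ind: "(LINT y|\<nu>. (if a y > 0 then d y else 0)) = rej_prob \<nu> \<phi>0 d" if "integrable \<nu> d" for d
      unfolding rej_prob_def
    proof (rule integral_cong_AE)
      have [measurable]: "d \<in> borel_measurable \<nu>" "a \<in> borel_measurable \<nu>" "\<phi>0 \<in> borel_measurable \<nu>"
        using that ai test_meas[OF t0] by auto
      show "(\<lambda>y. if 0 < a y then d y else 0) \<in> borel_measurable \<nu>" by measurable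
      show "(\<lambda>y. \<phi>0 y * d y) \<in> borel_measurable \<nu>" by measurable
      show "AE y in \<nu>. (if 0 < a y then d y else 0) = \<phi>0 y * d y"
        using phi_ind by eventually_elim auto
    qed
    show False
    proof (cases "c > 0")
      case True
      define b where "b y = c * (f \<theta>0 y - h y)" for y
      have bi: "integrable \<nu> b" unfolding b_def using f0i hi by auto
      have "(LINT y|\<nu>. (if a y > 0 then b y else 0)) = rej_prob \<nu> \<phi>0 b" by (rule ind[OF bi])
      also have "\<dots> = c * (rej_prob \<nu> \<phi>0 (f \<theta>0) - rej_prob \<nu> \<phi>0 h)"
        unfolding rej_prob_def b_def using i_phi[OF f0i] i_phi[OF hi]
        by (simp add: algebra_simps Bochner_Integration.integral_diff)
      also have "\<dots> > 0" using True gt size' by simp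
      finally obtain s where s: "0 < s" "s < 1"
        and less: "(LINT y|\<nu>. max 0 (a y - s * b y)) + s * 0 < (LINT y|\<nu>. max 0 (a y))"
        using perturb[OF ai bi nz, of 0 1] by auto
      define L' where "L' = mixm \<Lambda> \<theta>0 s"
      have L': "prob_on \<Theta>0 L'" unfolding L'_def using mixm_po[OF L th] s by auto
      define h' where "h' y = s * f \<theta>0 y + (1 - s) * h y" for y
      have h'i: "integrable \<nu> h'" unfolding h'_def using f0i hi by auto
      have ae: "AE y in \<nu>. mixture L' f y = h' y"
        unfolding L'_def h'_def h_def using mixm_mix[OF L th] s by auto
      have "beta \<nu> \<alpha> g (mixture L' f) \<le> (LINT y|\<nu>. max 0 (g y - c * h' y)) + c * \<alpha>"
        by (rule beta_upper[OF L' gi h'i ae c])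
      also have "(\<lambda>y. g y - c * h' y) = (\<lambda>y. a y - s * b y)"
        by (auto simp: a_def b_def h'_def algebra_simps)
      finally have "beta \<nu> \<alpha> g (mixture L' f) < rej_prob \<nu> \<phi>0 g" using less rg by simp
      moreover have "beta \<nu> \<alpha> g h \<le> beta \<nu> \<alpha> g (mixture L' f)"
        using LF L' by (simp add: least_favorable_def h_def)
      ultimately show False using betaL by simp
    next
      case False
      then have c0: "c = 0" using c by simp
      have "(LINT y|\<nu>. (if a y > 0 then f \<theta>0 y else 0)) = rej_prob \<nu> \<phi>0 (f \<theta>0)" by (rule ind[OF f0i])
      with gt have "(LINT y|\<nu>. (if a y > 0 then f \<theta>0 y else 0)) > \<alpha>" by simp
      then obtain s where s: "0 < s"
        and less: "(LINT y|\<nu>. max 0 (a y - s * f \<theta>0 y)) + s * \<alpha> < (LINT y|\<nu>. max 0 (a y))"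
        using perturb[OF ai f0i nz, of \<alpha> 1] by auto
      define L' where "L' = mixm \<Lambda> \<theta>0 1"
      have L': "prob_on \<Theta>0 L'" unfolding L'_def using mixm_po[OF L th] by auto
      have ae: "AE y in \<nu>. mixture L' f y = f \<theta>0 y"
        unfolding L'_def using mixm_mix[OF L th, of 1] by auto
      have "beta \<nu> \<alpha> g (mixture L' f) \<le> (LINT y|\<nu>. max 0 (g y - s * f \<theta>0 y)) + s * \<alpha>"
        by (rule beta_upper[OF L' gi f0i ae]) (use s in simp)
      also have "(\<lambda>y. g y - s * f \<theta>0 y) = (\<lambda>y. a y - s * f \<theta>0 y)"
        by (auto simp: a_def c0)
      finally have "beta \<nu> \<alpha> g (mixture L' f) < rej_prob \<nu> \<phi>0 g" using less rg c0 by simp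
      moreover have "beta \<nu> \<alpha> g h \<le> beta \<nu> \<alpha> g (mixture L' f)"
        using LF L' by (simp add: least_favorable_def h_def)
      ultimately show False using betaL by simp
    qed
  qed
  have inlev: "\<phi>0 \<in> level_tests \<nu> f \<Theta>0 \<alpha>" unfolding level_tests_def using t0 lev by simp
  have key: "rej_prob \<nu> \<phi>0 g - rej_prob \<nu> \<psi> g = (LINT y|\<nu>. (\<phi>0 y - \<psi> y) * a y) + c * (\<alpha> - rej_prob \<nu> \<psi> h)"
    and knn: "\<And>y. 0 \<le> (\<phi>0 y - \<psi> y) * a y"
    and ilev: "rej_prob \<nu> \<psi> h \<le> \<alpha>"
    and iint: "integrable \<nu> (\<lambda>y. (\<phi>0 y - \<psi> y) * a y)"
    if psi: "\<psi> \<in> level_tests \<nu> f \<Theta>0 \<alpha>" for \<psi>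
  proof -
    have tp: "is_test \<nu> \<psi>" using psi by (simp add: level_tests_def)
    show "rej_prob \<nu> \<psi> h \<le> \<alpha>" unfolding h_def
      by (rule level_mix[OF L tp]) (use psi in \<open>simp add: level_tests_def\<close>)
    show "integrable \<nu> (\<lambda>y. (\<phi>0 y - \<psi> y) * a y)"
      using i_phi[OF ai] test_int[OF tp ai] by (simp add: left_diff_distrib)
    show "rej_prob \<nu> \<phi>0 g - rej_prob \<nu> \<psi> g = (LINT y|\<nu>. (\<phi>0 y - \<psi> y) * a y) + c * (\<alpha> - rej_prob \<nu> \<psi> h)"
    proof -
      have e: "(\<lambda>y. (\<phi>0 y - \<psi> y) * a y) = (\<lambda>y. (\<phi>0 y * g y - \<psi> y * g y) - c * (\<phi>0 y * h y - \<psi> y * h y))"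
        by (auto simp: a_def algebra_simps)
      have "(LINT y|\<nu>. (\<phi>0 y - \<psi> y) * a y) = (rej_prob \<nu> \<phi>0 g - rej_prob \<nu> \<psi> g) - c * (rej_prob \<nu> \<phi>0 h - rej_prob \<nu> \<psi> h)"
        unfolding e rej_prob_def using i_phi[OF gi] i_phi[OF hi] test_int[OF tp gi] test_int[OF tp hi]
        by (simp add: Bochner_Integration.integral_diff)
      then show ?thesis using size' by simp
    qed
    show "0 \<le> (\<phi>0 y - \<psi> y) * a y" for y
      using test_bd[OF tp, of y] unfolding \<phi>0_def np_test_def a_def
      by (auto intro: mult_nonneg_nonpos mult_nonneg_nonneg)
  qed
  have opt: "\<forall>\<psi>\<in>level_tests \<nu> f \<Theta>0 \<alpha>. rej_prob \<nu> \<psi> g \<le> rej_prob \<nu> \<phi>0 g"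
  proof
    fix \<psi> assume psi: "\<psi> \<in> level_tests \<nu> f \<Theta>0 \<alpha>"
    have "0 \<le> (LINT y|\<nu>. (\<phi>0 y - \<psi> y) * a y)" using knn[OF psi] by (simp add: integral_nonneg)
    moreover have "0 \<le> c * (\<alpha> - rej_prob \<nu> \<psi> h)" using c ilev[OF psi] by simp
    ultimately show "rej_prob \<nu> \<psi> g \<le> rej_prob \<nu> \<phi>0 g" using key[OF psi] by linarith
  qed
  have uniq: "\<forall>\<psi>\<in>level_tests \<nu> f \<Theta>0 \<alpha>. rej_prob \<nu> \<psi> g = rej_prob \<nu> \<phi>0 g \<longrightarrow> (AE y in \<nu>. \<psi> y = \<phi>0 y)"
  proof (intro ballI impI)
    fix \<psi> assume psi: "\<psi> \<in> level_tests \<nu> f \<Theta>0 \<alpha>" and eq: "rej_prob \<nu> \<psi> g = rej_prob \<nu> \<phi>0 g"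
    have "0 \<le> (LINT y|\<nu>. (\<phi>0 y - \<psi> y) * a y)" using knn[OF psi] by (simp add: integral_nonneg)
    moreover have "0 \<le> c * (\<alpha> - rej_prob \<nu> \<psi> h)" using c ilev[OF psi] by simp
    ultimately have "(LINT y|\<nu>. (\<phi>0 y - \<psi> y) * a y) = 0" using key[OF psi] eq by linarith
    then have "AE y in \<nu>. (\<phi>0 y - \<psi> y) * a y = 0"
      using integral_nonneg_eq_0_iff_AE[OF iint[OF psi]] knn[OF psi] by simp
    then show "AE y in \<nu>. \<psi> y = \<phi>0 y" using nz by eventually_elim simp
  qed
  show ?thesis using inlev opt uniq by (simp add: \<phi>0_def h_def)
qed


lemma mixalt_int: assumes th: "\<forall>j. \<theta>s j \<in> \<Theta>"
  shows "integrable \<nu> (mix_alt f \<theta>s \<omega>)"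
  unfolding mix_alt_def[abs_def]
  by (rule Bochner_Integration.integrable_sum, rule integrable_mult_right) (use f_int th in auto)

lemma mixalt_nn: assumes th: "\<forall>j. \<theta>s j \<in> \<Theta>" and w: "\<omega> \<in> weight_simplex"
  shows "0 \<le> mix_alt f \<theta>s \<omega> y"
  unfolding mix_alt_def using f_nonneg th w by (intro sum_nonneg mult_nonneg_nonneg) (auto simp: weight_simplex_def)

lemma rej_mixalt: assumes th: "\<forall>j. \<theta>s j \<in> \<Theta>" and t: "is_test \<nu> \<psi>"
  shows "rej_prob \<nu> \<psi> (mix_alt f \<theta>s \<omega>) = (\<Sum>j\<in>UNIV. \<omega> j * rej_prob \<nu> \<psi> (f (\<theta>s j)))"
proof -
  have "rej_prob \<nu> \<psi> (mix_alt f \<theta>s \<omega>) = (LINT y|\<nu>. (\<Sum>j\<in>UNIV. \<omega> j * (\<psi> y * f (\<theta>s j) y)))"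
    unfolding rej_prob_def mix_alt_def by (simp add: sum_distrib_left algebra_simps)
  also have "\<dots> = (\<Sum>j\<in>UNIV. \<omega> j * rej_prob \<nu> \<psi> (f (\<theta>s j)))"
    unfolding rej_prob_def
    by (subst Bochner_Integration.integral_sum) (use test_int[OF t f_int] th in auto)
  finally show ?thesis .
qed

lemma gain_eq: assumes th: "\<forall>j. \<theta>s j \<in> \<Theta>" and t: "is_test \<nu> \<psi>" and ta: "is_test \<nu> \<phi>ah"
  shows "gain \<nu> f \<phi>ah \<theta>s \<psi> j = rej_prob \<nu> \<psi> (f (\<theta>s j)) - rej_prob \<nu> \<phi>ah (f (\<theta>s j))"
  unfolding gain_def rej_prob_def using test_int[OF t f_int] test_int[OF ta f_int] th
  by (simp add: left_diff_distrib Bochner_Integration.integral_diff)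

lemma wobj_eq: assumes th: "\<forall>j. \<theta>s j \<in> \<Theta>" and t: "is_test \<nu> \<psi>" and ta: "is_test \<nu> \<phi>ah"
  shows "wobj \<nu> f \<phi>ah \<theta>s \<omega> \<psi> = rej_prob \<nu> \<psi> (mix_alt f \<theta>s \<omega>) - rej_prob \<nu> \<phi>ah (mix_alt f \<theta>s \<omega>)"
  unfolding wobj_def gain_eq[OF th t ta] rej_mixalt[OF th t] rej_mixalt[OF th ta]
  by (simp add: right_diff_distrib sum_subtractf)

lemma rej_01: assumes "\<theta> \<in> \<Theta>" "is_test \<nu> \<psi>" shows "0 \<le> rej_prob \<nu> \<psi> (f \<theta>) \<and> rej_prob \<nu> \<psi> (f \<theta>) \<le> 1"
proof
  show "0 \<le> rej_prob \<nu> \<psi> (f \<theta>)" unfolding rej_prob_def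
    using test_bd[OF assms(2)] f_nonneg[OF assms(1)] by (intro integral_nonneg_AE AE_I2) auto
  show "rej_prob \<nu> \<psi> (f \<theta>) \<le> 1" using rej_le_int[OF assms(2) f_int f_nonneg] f_one assms(1) by auto
qed

lemma gain_bdd: assumes th: "\<forall>j. \<theta>s j \<in> \<Theta>" and ta: "is_test \<nu> \<phi>ah"
  shows "\<forall>\<phi>\<in>level_tests \<nu> f \<Theta>0 \<alpha>. \<forall>j. \<bar>gain \<nu> f \<phi>ah \<theta>s \<phi> j\<bar> \<le> 1"
proof (intro ballI allI)
  fix \<phi> j assume "\<phi> \<in> level_tests \<nu> f \<Theta>0 \<alpha>"
  then have t: "is_test \<nu> \<phi>" by (simp add: level_tests_def)
  show "\<bar>gain \<nu> f \<phi>ah \<theta>s \<phi> j\<bar> \<le> 1"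
    unfolding gain_eq[OF th t ta] using rej_01[of "\<theta>s j" \<phi>] rej_01[of "\<theta>s j" \<phi>ah] th t ta by auto
qed

lemma gain_cvx: assumes th: "\<forall>j. \<theta>s j \<in> \<Theta>" and ta: "is_test \<nu> \<phi>ah"
  shows "\<forall>\<phi>\<in>level_tests \<nu> f \<Theta>0 \<alpha>. \<forall>\<psi>\<in>level_tests \<nu> f \<Theta>0 \<alpha>. \<forall>u. 0 \<le> u \<and> u \<le> 1 \<longrightarrow>
     (\<exists>z\<in>level_tests \<nu> f \<Theta>0 \<alpha>. \<forall>j. gain \<nu> f \<phi>ah \<theta>s z j = u * gain \<nu> f \<phi>ah \<theta>s \<phi> j + (1 - u) * gain \<nu> f \<phi>ah \<theta>s \<psi> j)"
proof (intro ballI allI impI)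
  fix \<phi> \<psi> and u :: real assume p: "\<phi> \<in> level_tests \<nu> f \<Theta>0 \<alpha>" and q: "\<psi> \<in> level_tests \<nu> f \<Theta>0 \<alpha>" and u: "0 \<le> u \<and> u \<le> 1"
  have tp: "is_test \<nu> \<phi>" and tq: "is_test \<nu> \<psi>" using p q by (auto simp: level_tests_def)
  define z where "z y = u * \<phi> y + (1 - u) * \<psi> y" for y
  have tz: "is_test \<nu> z" unfolding is_test_def
  proof
    show "z \<in> borel_measurable \<nu>" unfolding z_def using test_meas[OF tp] test_meas[OF tq] by measurable
    show "\<forall>y. 0 \<le> z y \<and> z y \<le> 1"
    proof
      fix y
      have "u * \<phi> y \<le> u * 1" "(1 - u) * \<psi> y \<le> (1 - u) * 1"
        using u test_bd[OF tp, of y] test_bd[OF tq, of y] by (intro mult_left_mono; simp)+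
      then show "0 \<le> z y \<and> z y \<le> 1" unfolding z_def
        using u test_bd[OF tp, of y] test_bd[OF tq, of y] by auto
    qed
  qed
  have rz: "rej_prob \<nu> z d = u * rej_prob \<nu> \<phi> d + (1 - u) * rej_prob \<nu> \<psi> d" if "integrable \<nu> d" for d
    unfolding rej_prob_def z_def using test_int[OF tp that] test_int[OF tq that]
    by (simp add: distrib_right mult.assoc)
  have "z \<in> level_tests \<nu> f \<Theta>0 \<alpha>" unfolding level_tests_def
  proof (intro CollectI conjI ballI)
    show "is_test \<nu> z" by (rule tz)
    fix \<theta> assume th0: "\<theta> \<in> \<Theta>0"
    then have "\<theta> \<in> \<Theta>" using sub0 by auto
    then have "rej_prob \<nu> z (f \<theta>) = u * rej_prob \<nu> \<phi> (f \<theta>) + (1 - u) * rej_prob \<nu> \<psi> (f \<theta>)" by (intro rz f_int)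
    also have "\<dots> \<le> u * \<alpha> + (1 - u) * \<alpha>"
      using p q th0 u by (intro add_mono mult_left_mono) (auto simp: level_tests_def)
    finally show "rej_prob \<nu> z (f \<theta>) \<le> \<alpha>" by (simp add: algebra_simps)
  qed
  moreover have "\<forall>j. gain \<nu> f \<phi>ah \<theta>s z j = u * gain \<nu> f \<phi>ah \<theta>s \<phi> j + (1 - u) * gain \<nu> f \<phi>ah \<theta>s \<psi> j"
    unfolding gain_eq[OF th tz ta] gain_eq[OF th tp ta] gain_eq[OF th tq ta]
    using rz f_int th by (simp add: algebra_simps)
  ultimately show "\<exists>z\<in>level_tests \<nu> f \<Theta>0 \<alpha>. \<forall>j. gain \<nu> f \<phi>ah \<theta>s z j = u * gain \<nu> f \<phi>ah \<theta>s \<phi> j + (1 - u) * gain \<nu> f \<phi>ah \<theta>s \<psi> j"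
    by blast
qed

end



lemma sep_weights:
  fixes G :: "'t \<Rightarrow> 'm::finite \<Rightarrow> real" and P :: "'t set"
  assumes cvx: "\<forall>\<phi>\<in>P. \<forall>\<psi>\<in>P. \<forall>u. 0 \<le> u \<and> u \<le> 1 \<longrightarrow> (\<exists>z\<in>P. \<forall>j. G z j = u * G \<phi> j + (1 - u) * G \<psi> j)"
    and p1: "\<phi>1 \<in> P" and mx: "\<forall>\<psi>\<in>P. Min (range (G \<psi>)) \<le> Min (range (G \<phi>1))"
  shows "\<exists>\<omega>\<in>weight_simplex. \<forall>\<phi>\<in>P. (\<Sum>j\<in>UNIV. \<omega> j * G \<phi> j) \<le> Min (range (G \<phi>1))"
proof -
  define v where "v = Min (range (G \<phi>1))"
  define S :: "(real^'m) set" where "S = (\<lambda>\<phi>. \<chi> j. G \<phi> j) ` P"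
  define T :: "(real^'m) set" where "T = {x. \<forall>j. x$j > v}"
  have cS: "convex S" unfolding convex_def
  proof (intro ballI allI impI)
    fix x y :: "real^'m" and u w :: real assume x: "x \<in> S" and y: "y \<in> S" and uw: "0 \<le> u" "0 \<le> w" "u + w = 1"
    obtain \<phi> where \<phi>: "\<phi> \<in> P" "x = (\<chi> j. G \<phi> j)" using x S_def by auto
    obtain \<psi> where \<psi>: "\<psi> \<in> P" "y = (\<chi> j. G \<psi> j)" using y S_def by auto
    obtain \<chi>' where \<chi>': "\<chi>' \<in> P" "\<forall>j. G \<chi>' j = u * G \<phi> j + (1 - u) * G \<psi> j"
      using cvx \<phi>(1) \<psi>(1) uw by (metis add_increasing2 le_add_same_cancel1)
    have "u *\<^sub>R x + w *\<^sub>R y = (\<chi> j. G \<chi>' j)"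
      using \<chi>'(2) uw by (simp add: \<phi>(2) \<psi>(2) vec_eq_iff)
    then show "u *\<^sub>R x + w *\<^sub>R y \<in> S" using \<chi>'(1) S_def by auto
  qed
  have cT: "convex T" unfolding convex_def
  proof (intro ballI allI impI)
    fix x y :: "real^'m" and u w :: real assume x: "x \<in> T" and y: "y \<in> T" and uw: "0 \<le> u" "0 \<le> w" "u + w = 1"
    show "u *\<^sub>R x + w *\<^sub>R y \<in> T" unfolding T_def
    proof (intro CollectI allI)
      fix j
      have xj: "x$j > v" and yj: "y$j > v" using x y T_def by auto
      have "u * (x$j - v) + w * (y$j - v) > 0"
      proof (cases "u > 0")
        case True then show ?thesis using xj yj uw by (simp add: add_pos_nonneg)
      next
        case False then have "w > 0" using uw by simp
        then show ?thesis using xj yj uw by (simp add: add_nonneg_pos)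
      qed
      then have p: "u * (x $ j) - u * v + (w * (y $ j) - w * v) > 0" by (simp add: right_diff_distrib)
      have vv: "v = u * v + w * v" using uw by (metis distrib_right mult_1_left)
      have "(u *\<^sub>R x + w *\<^sub>R y) $ j = u * (x$j) + w * (y$j)" by simp
      then show "(u *\<^sub>R x + w *\<^sub>R y) $ j > v" using p vv by linarith
    qed
  qed
  have nS: "S \<noteq> {}" using p1 S_def by auto
  have "(\<chi> j. v + 1) \<in> T" unfolding T_def by simp
  then have nT: "T \<noteq> {}" by blast
  have dST: "S \<inter> T = {}"
  proof (rule ccontr)
    assume "S \<inter> T \<noteq> {}"
    then obtain \<phi> where \<phi>: "\<phi> \<in> P" "\<forall>j. G \<phi> j > v" using S_def T_def by auto
    then have "Min (range (G \<phi>)) > v" by (subst Min_gr_iff) auto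
    moreover have "Min (range (G \<phi>)) \<le> v" using mx \<phi>(1) v_def by blast
    ultimately show False by linarith
  qed
  obtain a b where a0: "a \<noteq> 0" and aS: "\<forall>x\<in>S. inner a x \<le> b" and aT: "\<forall>x\<in>T. inner a x \<ge> b"
    using separating_hyperplane_sets[OF cS cT nS nT dST] by blast
  have inn: "inner a x = (\<Sum>j\<in>UNIV. a$j * x$j)" for x :: "real^'m" by (simp add: inner_vec_def)
  define A where "A = (\<Sum>j\<in>UNIV. a$j)"
  have anneg: "a$k \<ge> 0" for k
  proof (rule ccontr)
    assume "\<not> a$k \<ge> 0" then have ak: "a$k < 0" by simp
    define M where "M = (\<bar>b\<bar> + \<bar>(v+1) * A\<bar> + 1) / (- a$k)"
    have M0: "M \<ge> 0" unfolding M_def using ak by (intro divide_nonneg_pos) auto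
    define x :: "real^'m" where "x = (\<chi> j. v + 1 + (if j = k then M else 0))"
    have "x \<in> T" unfolding T_def x_def using M0 by simp
    then have "b \<le> inner a x" using aT by blast
    also have "inner a x = (\<Sum>j\<in>UNIV. a$j * (v+1)) + (\<Sum>j\<in>UNIV. a$j * (if j = k then M else 0))"
      unfolding inn x_def by (simp add: sum.distrib distrib_left)
    also have "(\<Sum>j\<in>UNIV. a$j * (v+1)) = (v+1) * A" unfolding A_def by (metis mult.commute sum_distrib_right)
    also have "(\<Sum>j\<in>UNIV. a$j * (if j = k then M else 0)) = a$k * M"
    proof -
      have "(\<Sum>j\<in>UNIV. a$j * (if j = k then M else 0)) = (\<Sum>j\<in>UNIV. if j = k then a$j * M else 0)"
        by (rule sum.cong) auto
      then show ?thesis by simp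
    qed
    also have "a$k * M = - (\<bar>b\<bar> + \<bar>(v+1) * A\<bar> + 1)" unfolding M_def using ak by simp
    finally show False by linarith
  qed
  obtain k where "a$k \<noteq> 0" using a0 by (metis vec_eq_iff zero_index)
  then have akp: "a$k > 0" using anneg[of k] by simp
  have Apos: "A > 0" unfolding A_def
    using akp anneg by (metis (no_types, lifting) UNIV_I finite less_le_trans member_le_sum)
  have bv: "b \<le> v * A"
  proof (rule field_le_epsilon)
    fix e :: real assume e: "0 < e"
    define \<epsilon> where "\<epsilon> = e / A"
    have ep: "\<epsilon> > 0" using e Apos by (simp add: \<epsilon>_def)
    have "(\<chi> j. v + \<epsilon>) \<in> T" unfolding T_def using ep by simp
    then have "b \<le> inner a (\<chi> j. v + \<epsilon>)" using aT by blast
    also have "\<dots> = (v + \<epsilon>) * A" unfolding inn A_def by simp (metis mult.commute sum_distrib_right)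
    also have "\<dots> = v * A + e" using Apos by (simp add: \<epsilon>_def algebra_simps)
    finally show "b \<le> v * A + e" .
  qed
  define \<omega> where "\<omega> j = a$j / A" for j
  have ws: "\<omega> \<in> weight_simplex" unfolding weight_simplex_def \<omega>_def
    using anneg Apos by (auto simp: sum_divide_distrib[symmetric] A_def)
  have "(\<Sum>j\<in>UNIV. \<omega> j * G \<phi> j) \<le> v" if "\<phi> \<in> P" for \<phi>
  proof -
    have "(\<chi> j. G \<phi> j) \<in> S" using that S_def by auto
    then have "inner a (\<chi> j. G \<phi> j) \<le> b" using aS by blast
    then have "(\<Sum>j\<in>UNIV. a$j * G \<phi> j) \<le> v * A" using bv unfolding inn by simp
    then have "(\<Sum>j\<in>UNIV. a$j * G \<phi> j) / A \<le> v" using Apos by (simp add: divide_le_eq)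
    then show ?thesis by (simp add: \<omega>_def sum_divide_distrib)
  qed
  then show ?thesis using ws v_def by blast
qed

lemma minimax_abstract:
  fixes G :: "'t \<Rightarrow> 'm::finite \<Rightarrow> real" and P :: "'t set"
  assumes cvx: "\<forall>\<phi>\<in>P. \<forall>\<psi>\<in>P. \<forall>u. 0 \<le> u \<and> u \<le> 1 \<longrightarrow> (\<exists>z\<in>P. \<forall>j. G z j = u * G \<phi> j + (1 - u) * G \<psi> j)"
    and bdd: "\<forall>\<phi>\<in>P. \<forall>j. \<bar>G \<phi> j\<bar> \<le> B"
    and p1: "\<phi>1 \<in> P" and mx: "\<forall>\<psi>\<in>P. Min (range (G \<psi>)) \<le> Min (range (G \<phi>1))"
    and w1: "\<omega>1 \<in> weight_simplex"
    and dmin: "\<forall>\<omega>'\<in>weight_simplex. (SUP \<phi>\<in>P. (\<Sum>j\<in>UNIV. \<omega>1 j * G \<phi> j)) \<le> (SUP \<phi>\<in>P. (\<Sum>j\<in>UNIV. \<omega>' j * G \<phi> j))"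
  shows "\<forall>\<psi>\<in>P. (\<Sum>j\<in>UNIV. \<omega>1 j * G \<psi> j) \<le> (\<Sum>j\<in>UNIV. \<omega>1 j * G \<phi>1 j)"
proof
  fix \<psi> assume psi: "\<psi> \<in> P"
  obtain \<omega>' where w': "\<omega>' \<in> weight_simplex" and le: "\<forall>\<phi>\<in>P. (\<Sum>j\<in>UNIV. \<omega>' j * G \<phi> j) \<le> Min (range (G \<phi>1))"
    using sep_weights[OF cvx p1 mx] by blast
  have w1p: "\<forall>j. 0 \<le> \<omega>1 j" "(\<Sum>j\<in>UNIV. \<omega>1 j) = 1" using w1 by (auto simp: weight_simplex_def)
  have bd: "(\<Sum>j\<in>UNIV. \<omega>1 j * G \<phi> j) \<le> B" if "\<phi> \<in> P" for \<phi>
  proof -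
    have "(\<Sum>j\<in>UNIV. \<omega>1 j * G \<phi> j) \<le> (\<Sum>j\<in>UNIV. \<omega>1 j * B)"
      using bdd that w1p by (intro sum_mono mult_left_mono) (auto simp: abs_le_iff)
    also have "\<dots> = B" using w1p by (simp add: sum_distrib_right[symmetric])
    finally show ?thesis .
  qed
  have "(\<Sum>j\<in>UNIV. \<omega>1 j * G \<psi> j) \<le> (SUP \<phi>\<in>P. (\<Sum>j\<in>UNIV. \<omega>1 j * G \<phi> j))"
    by (rule cSUP_upper[OF psi]) (use bd in \<open>auto intro!: bdd_aboveI2\<close>)
  also have "\<dots> \<le> (SUP \<phi>\<in>P. (\<Sum>j\<in>UNIV. \<omega>' j * G \<phi> j))" using dmin w' by blast
  also have "\<dots> \<le> Min (range (G \<phi>1))" by (rule cSUP_least) (use p1 le in auto)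
  also have "\<dots> \<le> (\<Sum>j\<in>UNIV. \<omega>1 j * G \<phi>1 j)"
  proof -
    have "Min (range (G \<phi>1)) = (\<Sum>j\<in>UNIV. \<omega>1 j * Min (range (G \<phi>1)))"
      using w1p by (simp add: sum_distrib_right[symmetric])
    also have "\<dots> \<le> (\<Sum>j\<in>UNIV. \<omega>1 j * G \<phi>1 j)"
      using w1p by (intro sum_mono mult_left_mono) auto
    finally show ?thesis .
  qed
  finally show "(\<Sum>j\<in>UNIV. \<omega>1 j * G \<psi> j) \<le> (\<Sum>j\<in>UNIV. \<omega>1 j * G \<phi>1 j)" .
qed




theorem theorem2:
  fixes \<nu> :: "'y::metric_space measure"
    and f :: "real^'k \<Rightarrow> 'y \<Rightarrow> real"
    and \<Theta> \<Theta>0 \<Theta>1 :: "(real^'k) set"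
    and \<alpha> :: real
    and \<phi>ah :: "'y \<Rightarrow> real"
    and \<theta>s :: "'m::finite \<Rightarrow> real^'k"
    and \<Lambda>s :: "('m \<Rightarrow> real) \<Rightarrow> (real^'k) measure"
    and cv \<kappa> :: "('m \<Rightarrow> real) \<Rightarrow> real"
  assumes sets_nu: "sets \<nu> = sets borel"
    and sigma_finite: "sigma_finite_measure \<nu>"
    and f_meas: "(\<lambda>(\<theta>, y). f \<theta> y) \<in> borel_measurable (borel \<Otimes>\<^sub>M borel)"
    and f_dens: "\<forall>\<theta>\<in>\<Theta>. (\<forall>y. 0 \<le> f \<theta> y) \<and> integrable \<nu> (f \<theta>) \<and> (LINT y|\<nu>. f \<theta> y) = 1"
    and Theta_sub: "\<Theta>0 \<subseteq> \<Theta>" "\<Theta>1 \<subseteq> \<Theta>"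
    and disj: "\<Theta>0 \<inter> \<Theta>1 = {}"
    and borel_sets: "\<Theta>0 \<in> sets borel" "\<Theta>1 \<in> sets borel"
    and alpha: "0 < \<alpha>" "\<alpha> < 1"
    and thetas: "\<forall>j. \<theta>s j \<in> \<Theta>1"
    and ah: "\<phi>ah \<in> level_tests \<nu> f \<Theta>0 \<alpha>"
    and lfd: "\<forall>\<omega> \<in> Delta_star \<nu> f \<Theta>0 \<alpha> \<phi>ah \<theta>s.
        least_favorable \<nu> f \<Theta>0 \<alpha> (mix_alt f \<theta>s \<omega>) (\<Lambda>s \<omega>)
        \<and> 0 \<le> cv \<omega> \<and> 0 \<le> \<kappa> \<omega> \<and> \<kappa> \<omega> \<le> 1
        \<and> rej_prob \<nu> (np_test (mix_alt f \<theta>s \<omega>) (mixture (\<Lambda>s \<omega>) f) (cv \<omega>) (\<kappa> \<omega>))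
                   (mixture (\<Lambda>s \<omega>) f) = \<alpha>
        \<and> emeasure \<nu> {y. mix_alt f \<theta>s \<omega> y = cv \<omega> * mixture (\<Lambda>s \<omega>) f y} = 0"
  shows "(\<forall>\<omega> \<in> Delta_star \<nu> f \<Theta>0 \<alpha> \<phi>ah \<theta>s.
            let \<phi>0 = np_test (mix_alt f \<theta>s \<omega>) (mixture (\<Lambda>s \<omega>) f) (cv \<omega>) (\<kappa> \<omega>) in
            \<phi>0 \<in> level_tests \<nu> f \<Theta>0 \<alpha>
            \<and> (\<forall>\<psi> \<in> level_tests \<nu> f \<Theta>0 \<alpha>. wobj \<nu> f \<phi>ah \<theta>s \<omega> \<psi> \<le> wobj \<nu> f \<phi>ah \<theta>s \<omega> \<phi>0)
            \<and> (\<forall>\<psi> \<in> level_tests \<nu> f \<Theta>0 \<alpha>.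
                  wobj \<nu> f \<phi>ah \<theta>s \<omega> \<psi> = wobj \<nu> f \<phi>ah \<theta>s \<omega> \<phi>0 \<longrightarrow> (AE y in \<nu>. \<psi> y = \<phi>0 y)))
       \<and> (\<forall>\<phi>1 \<in> Phi_star \<nu> f \<Theta>0 \<alpha> \<phi>ah \<theta>s. \<forall>\<phi>2 \<in> Phi_star \<nu> f \<Theta>0 \<alpha> \<phi>ah \<theta>s.
            \<forall>\<omega>1 \<in> Delta_star \<nu> f \<Theta>0 \<alpha> \<phi>ah \<theta>s. \<forall>\<omega>2 \<in> Delta_star \<nu> f \<Theta>0 \<alpha> \<phi>ah \<theta>s.
              AE y in \<nu>. \<phi>1 y = \<phi>2 y
                \<and> \<phi>2 y = np_test (mix_alt f \<theta>s \<omega>1) (mixture (\<Lambda>s \<omega>1) f) (cv \<omega>1) (\<kappa> \<omega>1) y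
                \<and> np_test (mix_alt f \<theta>s \<omega>1) (mixture (\<Lambda>s \<omega>1) f) (cv \<omega>1) (\<kappa> \<omega>1) y
                  = np_test (mix_alt f \<theta>s \<omega>2) (mixture (\<Lambda>s \<omega>2) f) (cv \<omega>2) (\<kappa> \<omega>2) y)"
proof -
  interpret T: tsetup \<nu> f \<Theta> \<Theta>0 \<alpha>
    by (rule tsetup.intro[OF sets_nu sigma_finite f_meas f_dens Theta_sub(1) alpha(1) borel_sets(1)])
  have thT: "\<forall>j. \<theta>s j \<in> \<Theta>" using thetas Theta_sub by auto
  have tah: "is_test \<nu> \<phi>ah" using ah by (simp add: level_tests_def)
  have P1: "\<forall>\<omega> \<in> Delta_star \<nu> f \<Theta>0 \<alpha> \<phi>ah \<theta>s.
            let \<phi>0 = np_test (mix_alt f \<theta>s \<omega>) (mixture (\<Lambda>s \<omega>) f) (cv \<omega>) (\<kappa> \<omega>) in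
            \<phi>0 \<in> level_tests \<nu> f \<Theta>0 \<alpha>
            \<and> (\<forall>\<psi> \<in> level_tests \<nu> f \<Theta>0 \<alpha>. wobj \<nu> f \<phi>ah \<theta>s \<omega> \<psi> \<le> wobj \<nu> f \<phi>ah \<theta>s \<omega> \<phi>0)
            \<and> (\<forall>\<psi> \<in> level_tests \<nu> f \<Theta>0 \<alpha>.
                  wobj \<nu> f \<phi>ah \<theta>s \<omega> \<psi> = wobj \<nu> f \<phi>ah \<theta>s \<omega> \<phi>0 \<longrightarrow> (AE y in \<nu>. \<psi> y = \<phi>0 y))"
  proof
    fix \<omega> assume w: "\<omega> \<in> Delta_star \<nu> f \<Theta>0 \<alpha> \<phi>ah \<theta>s"
    have ws: "\<omega> \<in> weight_simplex" using w by (simp add: Delta_star_def)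
    define \<phi>0 where "\<phi>0 = np_test (mix_alt f \<theta>s \<omega>) (mixture (\<Lambda>s \<omega>) f) (cv \<omega>) (\<kappa> \<omega>)"
    have l: "least_favorable \<nu> f \<Theta>0 \<alpha> (mix_alt f \<theta>s \<omega>) (\<Lambda>s \<omega>)" "0 \<le> cv \<omega>" "0 \<le> \<kappa> \<omega>" "\<kappa> \<omega> \<le> 1"
      "rej_prob \<nu> (np_test (mix_alt f \<theta>s \<omega>) (mixture (\<Lambda>s \<omega>) f) (cv \<omega>) (\<kappa> \<omega>)) (mixture (\<Lambda>s \<omega>) f) = \<alpha>"
      "emeasure \<nu> {y. mix_alt f \<theta>s \<omega> y = cv \<omega> * mixture (\<Lambda>s \<omega>) f y} = 0"
      using lfd w by auto
    have M: "\<phi>0 \<in> level_tests \<nu> f \<Theta>0 \<alpha>"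
       "\<forall>\<psi>\<in>level_tests \<nu> f \<Theta>0 \<alpha>. rej_prob \<nu> \<psi> (mix_alt f \<theta>s \<omega>) \<le> rej_prob \<nu> \<phi>0 (mix_alt f \<theta>s \<omega>)"
       "\<forall>\<psi>\<in>level_tests \<nu> f \<Theta>0 \<alpha>. rej_prob \<nu> \<psi> (mix_alt f \<theta>s \<omega>) = rej_prob \<nu> \<phi>0 (mix_alt f \<theta>s \<omega>)
           \<longrightarrow> (AE y in \<nu>. \<psi> y = \<phi>0 y)"
      using T.np_main[OF T.mixalt_int[OF thT] T.mixalt_nn[OF thT ws] l] unfolding \<phi>0_def by auto
    have t0: "is_test \<nu> \<phi>0" using M(1) by (simp add: level_tests_def)
    have we: "wobj \<nu> f \<phi>ah \<theta>s \<omega> \<psi> = rej_prob \<nu> \<psi> (mix_alt f \<theta>s \<omega>) - rej_prob \<nu> \<phi>ah (mix_alt f \<theta>s \<omega>)"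
      if "\<psi> \<in> level_tests \<nu> f \<Theta>0 \<alpha>" for \<psi>
      using T.wobj_eq[OF thT _ tah] that by (simp add: level_tests_def)
    have "\<phi>0 \<in> level_tests \<nu> f \<Theta>0 \<alpha>
            \<and> (\<forall>\<psi> \<in> level_tests \<nu> f \<Theta>0 \<alpha>. wobj \<nu> f \<phi>ah \<theta>s \<omega> \<psi> \<le> wobj \<nu> f \<phi>ah \<theta>s \<omega> \<phi>0)
            \<and> (\<forall>\<psi> \<in> level_tests \<nu> f \<Theta>0 \<alpha>.
                  wobj \<nu> f \<phi>ah \<theta>s \<omega> \<psi> = wobj \<nu> f \<phi>ah \<theta>s \<omega> \<phi>0 \<longrightarrow> (AE y in \<nu>. \<psi> y = \<phi>0 y))"
      using M we[OF M(1)] we by auto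
    then show "let \<phi>0 = np_test (mix_alt f \<theta>s \<omega>) (mixture (\<Lambda>s \<omega>) f) (cv \<omega>) (\<kappa> \<omega>) in
            \<phi>0 \<in> level_tests \<nu> f \<Theta>0 \<alpha>
            \<and> (\<forall>\<psi> \<in> level_tests \<nu> f \<Theta>0 \<alpha>. wobj \<nu> f \<phi>ah \<theta>s \<omega> \<psi> \<le> wobj \<nu> f \<phi>ah \<theta>s \<omega> \<phi>0)
            \<and> (\<forall>\<psi> \<in> level_tests \<nu> f \<Theta>0 \<alpha>.
                  wobj \<nu> f \<phi>ah \<theta>s \<omega> \<psi> = wobj \<nu> f \<phi>ah \<theta>s \<omega> \<phi>0 \<longrightarrow> (AE y in \<nu>. \<psi> y = \<phi>0 y))"
      unfolding Let_def \<phi>0_def .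
  qed
  have key: "AE y in \<nu>. \<phi> y = np_test (mix_alt f \<theta>s \<omega>1) (mixture (\<Lambda>s \<omega>1) f) (cv \<omega>1) (\<kappa> \<omega>1) y"
    if ph: "\<phi> \<in> Phi_star \<nu> f \<Theta>0 \<alpha> \<phi>ah \<theta>s" and om: "\<omega>1 \<in> Delta_star \<nu> f \<Theta>0 \<alpha> \<phi>ah \<theta>s" for \<phi> \<omega>1
  proof -
    define \<phi>0 where "\<phi>0 = np_test (mix_alt f \<theta>s \<omega>1) (mixture (\<Lambda>s \<omega>1) f) (cv \<omega>1) (\<kappa> \<omega>1)"
    have p1: "\<phi> \<in> level_tests \<nu> f \<Theta>0 \<alpha>"
      and mx: "\<forall>\<psi>\<in>level_tests \<nu> f \<Theta>0 \<alpha>. Min (range (gain \<nu> f \<phi>ah \<theta>s \<psi>)) \<le> Min (range (gain \<nu> f \<phi>ah \<theta>s \<phi>))"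
      using ph by (auto simp: Phi_star_def)
    have w1: "\<omega>1 \<in> weight_simplex"
      and dmin: "\<forall>\<omega>'\<in>weight_simplex. (SUP \<phi>\<in>level_tests \<nu> f \<Theta>0 \<alpha>. (\<Sum>j\<in>UNIV. \<omega>1 j * gain \<nu> f \<phi>ah \<theta>s \<phi> j))
          \<le> (SUP \<phi>\<in>level_tests \<nu> f \<Theta>0 \<alpha>. (\<Sum>j\<in>UNIV. \<omega>' j * gain \<nu> f \<phi>ah \<theta>s \<phi> j))"
      using om by (auto simp: Delta_star_def wobj_def)
    have mm: "\<forall>\<psi>\<in>level_tests \<nu> f \<Theta>0 \<alpha>. wobj \<nu> f \<phi>ah \<theta>s \<omega>1 \<psi> \<le> wobj \<nu> f \<phi>ah \<theta>s \<omega>1 \<phi>"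
      using minimax_abstract[OF T.gain_cvx[OF thT tah] T.gain_bdd[OF thT tah] p1 mx w1 dmin]
      by (simp add: wobj_def)
    have q: "\<phi>0 \<in> level_tests \<nu> f \<Theta>0 \<alpha>"
      "\<forall>\<psi> \<in> level_tests \<nu> f \<Theta>0 \<alpha>. wobj \<nu> f \<phi>ah \<theta>s \<omega>1 \<psi> \<le> wobj \<nu> f \<phi>ah \<theta>s \<omega>1 \<phi>0"
      "\<forall>\<psi> \<in> level_tests \<nu> f \<Theta>0 \<alpha>.
                  wobj \<nu> f \<phi>ah \<theta>s \<omega>1 \<psi> = wobj \<nu> f \<phi>ah \<theta>s \<omega>1 \<phi>0 \<longrightarrow> (AE y in \<nu>. \<psi> y = \<phi>0 y)"
      using P1 om unfolding \<phi>0_def Let_def by auto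
    have "wobj \<nu> f \<phi>ah \<theta>s \<omega>1 \<phi> = wobj \<nu> f \<phi>ah \<theta>s \<omega>1 \<phi>0"
      using mm q(1,2) p1 by (meson order.antisym)
    then show ?thesis using q(3) p1 unfolding \<phi>0_def by blast
  qed
  have P2: "\<forall>\<phi>1 \<in> Phi_star \<nu> f \<Theta>0 \<alpha> \<phi>ah \<theta>s. \<forall>\<phi>2 \<in> Phi_star \<nu> f \<Theta>0 \<alpha> \<phi>ah \<theta>s.
            \<forall>\<omega>1 \<in> Delta_star \<nu> f \<Theta>0 \<alpha> \<phi>ah \<theta>s. \<forall>\<omega>2 \<in> Delta_star \<nu> f \<Theta>0 \<alpha> \<phi>ah \<theta>s.
              AE y in \<nu>. \<phi>1 y = \<phi>2 y
                \<and> \<phi>2 y = np_test (mix_alt f \<theta>s \<omega>1) (mixture (\<Lambda>s \<omega>1) f) (cv \<omega>1) (\<kappa> \<omega>1) y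
                \<and> np_test (mix_alt f \<theta>s \<omega>1) (mixture (\<Lambda>s \<omega>1) f) (cv \<omega>1) (\<kappa> \<omega>1) y
                  = np_test (mix_alt f \<theta>s \<omega>2) (mixture (\<Lambda>s \<omega>2) f) (cv \<omega>2) (\<kappa> \<omega>2) y"
  proof (intro ballI)
    fix \<phi>1 \<phi>2 \<omega>1 \<omega>2
    assume a1: "\<phi>1 \<in> Phi_star \<nu> f \<Theta>0 \<alpha> \<phi>ah \<theta>s" and a2: "\<phi>2 \<in> Phi_star \<nu> f \<Theta>0 \<alpha> \<phi>ah \<theta>s"
      and b1: "\<omega>1 \<in> Delta_star \<nu> f \<Theta>0 \<alpha> \<phi>ah \<theta>s" and b2: "\<omega>2 \<in> Delta_star \<nu> f \<Theta>0 \<alpha> \<phi>ah \<theta>s"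
    show "AE y in \<nu>. \<phi>1 y = \<phi>2 y
                \<and> \<phi>2 y = np_test (mix_alt f \<theta>s \<omega>1) (mixture (\<Lambda>s \<omega>1) f) (cv \<omega>1) (\<kappa> \<omega>1) y
                \<and> np_test (mix_alt f \<theta>s \<omega>1) (mixture (\<Lambda>s \<omega>1) f) (cv \<omega>1) (\<kappa> \<omega>1) y
                  = np_test (mix_alt f \<theta>s \<omega>2) (mixture (\<Lambda>s \<omega>2) f) (cv \<omega>2) (\<kappa> \<omega>2) y"
      using key[OF a1 b1] key[OF a2 b1] key[OF a1 b2] by eventually_elim auto
  qed
  show ?thesis using P1 P2 by blast
qed


end
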